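(* Let $G$ be a graph with vertices labelled $1,\dots,n$, let $A$ be an $\mathrm{Aut}\,G$-invariant normal subgroup of $\mathbb{Z}_2^{*V(G)}$, and let $\Gamma=\mathbb{Z}_2^{*V(G)}/A$. Then there exists a skew graph category $\mathscr{C}$ such that $\mathscr{C}^G$ is the representation category of the quantum group $\mathbb{G}=\hat\Gamma\rtimes\mathrm{Aut}\,G$, i.e. $\mathscr{C}^G(k,l)=\mathrm{Mor}(u^{\otimes k},u^{\otimes l})$ for all $k,l\in\mathbb{N}_0$, where $u$ is the fundamental representation of $\mathbb{G}$.
   Context: Graphs are finite, undirected, without multiple edges, loops allowed, up to isomorphism; $N_k$ is the edgeless graph on $k$ vertices; graph homomorphisms map edges (including loops) to edges. $\mathbb{Z}_2^{*V}$ is the group generated by the set $V$ subject to $v^2=e$; automorphisms of $G$ act on $\mathbb{Z}_2^{*V(G)}$ by permuting generators. A vertex overlap of graphs $K,H$ is a subset $f\subset V(K)\times V(H)$ in which each vertex occurs at most once; $K\cup_fH$ is the quotient of $K\sqcup H$ identifying $v$ with $w$ for $(v,w)\in f$, with induced maps $f_K,f_H$. A bilabelled graph is $(K,\mathbf{a},\mathbf{b})$ with $\mathbf{a}\in V(K)^k$, $\mathbf{b}\in V(K)^l$, up to isomorphism preserving tuples; $\mathscr{C}(k,l)$ those with $k$ inputs, $l$ outputs. A skew graph category is a set of bilabelled graphs containing $(N_0,\emptyset,\emptyset)$, $(M,(v),(v))$, $(M,\emptyset,(v,v))$ ($M$ the one-vertex loopless graph with vertex $v$), closed under all $f$-unions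 $(K,\mathbf{a},\mathbf{b})\cup_f(H,\mathbf{c},\mathbf{d})=(K\cup_fH,f_K(\mathbf{a})f_H(\mathbf{c}),f_K(\mathbf{b})f_H(\mathbf{d}))$, under involution $(K,\mathbf{a},\mathbf{b})\mapsto(K,\mathbf{b},\mathbf{a})$, and under compositions $(H,\mathbf{c},\mathbf{d})\cdot(K,\mathbf{a},\mathbf{b})=(H\cdot K,\mathbf{a},\mathbf{d})$ ($H\cdot K$ the quotient of $K\sqcup H$ identifying $b_i$ with $c_i$) whenever $\mathbf{b}$ and $\mathbf{c}$ have the same pattern of equal entries. $\hat T^G_{(K,\mathbf{a},\mathbf{b})}\colon(\mathbb{C}^n)^{\otimes k}\to(\mathbb{C}^n)^{\otimes l}$ has $(\mathbf{j},\mathbf{i})$-entry $\#\{\phi\colon K\to G\text{ injective homomorphism}\mid\phi(\mathbf{a})=\mathbf{i},\phi(\mathbf{b})=\mathbf{j}\}$ and $\mathscr{C}^G(k,l)=\mathrm{span}\{\hat T^G_{\mathbf{K}}\mid\mathbf{K}\in\mathscr{C}(k,l)\}$. Quantum groups: for an orthogonal compact matrix quantum group $(O(\mathbb{G}),u)$, $\mathrm{Mor}(u^{\otimes k},u^{\otimes l})=\{T\colon(\mathbb{C}^n)^{\otimes k}\to(\mathbb{C}^n)^{\otimes l}\mid Tu^{\otimes k}=u^{\otimes l}T\}$. A permutation group $H\subset S_n$ is the quantum group $(O(H),v)$ with $v_{ij}(\sigma)=\delta_{i\sigma(j)}$; $\mathrm{Aut}\,G\subset S_n$ via the labelling. For $\Gamma$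 a quotient of $\mathbb{Z}_2^{*n}$ by an $H$-invariant normal subgroup, with $\gamma_i\in\mathbb{C}\Gamma$ the images of the generators, $\hat\Gamma\rtimes H$ is $(\mathbb{C}\Gamma\otimes O(H),u)$ with $u_{ij}=\gamma_i\otimes v_{ij}$. *)

theory Defs
  imports Complex_Main "HOL-Library.FuncSet" "HOL-Combinatorics.Permutations"
begin

text \<open>Edges are a symmetric set of ordered pairs; a pair (x,x) is a loop.
  Sets of bilabelled graphs "up to isomorphism" are represented by isomorphism-closed sets.\<close>

record blg =
  bverts :: "nat set"
  bedges :: "(nat \<times> nat) set"
  bin    :: "nat list"
  bout   :: "nat list"

definition wf_blg :: "blg \<Rightarrow> bool" where
  "wf_blg K \<longleftrightarrow> finite (bverts K) \<and> bedges K \<subseteq> bverts K \<times> bverts K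
     \<and> sym (bedges K) \<and> set (bin K) \<subseteq> bverts K \<and> set (bout K) \<subseteq> bverts K"

definition blg_iso :: "blg \<Rightarrow> blg \<Rightarrow> bool" where
  "blg_iso K L \<longleftrightarrow> (\<exists>\<phi>. bij_betw \<phi> (bverts K) (bverts L)
     \<and> (\<forall>x\<in>bverts K. \<forall>y\<in>bverts K. (x, y) \<in> bedges K \<longleftrightarrow> (\<phi> x, \<phi> y) \<in> bedges L)
     \<and> map \<phi> (bin K) = bin L \<and> map \<phi> (bout K) = bout L)"

definition blg_N0 :: blg where
  "blg_N0 = \<lparr>bverts = {}, bedges = {}, bin = [], bout = []\<rparr>"

definition blg_M_id :: blg where
  "blg_M_id = \<lparr>bverts = {0}, bedges = {}, bin = [0], bout = [0]\<rparr>"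

definition blg_M_cup :: blg where
  "blg_M_cup = \<lparr>bverts = {0}, bedges = {}, bin = [], bout = [0, 0]\<rparr>"

definition blg_inv :: "blg \<Rightarrow> blg" where
  "blg_inv K = \<lparr>bverts = bverts K, bedges = bedges K, bin = bout K, bout = bin K\<rparr>"

definition vertex_overlap :: "blg \<Rightarrow> blg \<Rightarrow> (nat \<times> nat) set \<Rightarrow> bool" where
  "vertex_overlap K H f \<longleftrightarrow> f \<subseteq> bverts K \<times> bverts H
     \<and> (\<forall>(a, b)\<in>f. \<forall>(c, d)\<in>f. (a = c \<longleftrightarrow> b = d))"

text \<open>Concrete model of the quotient of the disjoint union: vertex x of K becomes 2x,
  vertex y of H becomes 2y+1 unless it is identified with a vertex of K.\<close>
definition union_mapH :: "(nat \<times> nat) set \<Rightarrow> nat \<Rightarrow> nat" where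
  "union_mapH f y = (if \<exists>x. (x, y) \<in> f then 2 * (SOME x. (x, y) \<in> f) else 2 * y + 1)"

definition pmap :: "(nat \<Rightarrow> nat) \<Rightarrow> (nat \<times> nat) set \<Rightarrow> (nat \<times> nat) set" where
  "pmap g E = (\<lambda>(x, y). (g x, g y)) ` E"

definition blg_union :: "blg \<Rightarrow> (nat \<times> nat) set \<Rightarrow> blg \<Rightarrow> blg" where
  "blg_union K f H =
     \<lparr>bverts = (\<lambda>x. 2 * x) ` bverts K \<union> union_mapH f ` bverts H,
      bedges = pmap (\<lambda>x. 2 * x) (bedges K) \<union> pmap (union_mapH f) (bedges H),
      bin = map (\<lambda>x. 2 * x) (bin K) @ map (union_mapH f) (bin H),
      bout = map (\<lambda>x. 2 * x) (bout K) @ map (union_mapH f) (bout H)\<rparr>"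

definition same_pattern :: "nat list \<Rightarrow> nat list \<Rightarrow> bool" where
  "same_pattern b c \<longleftrightarrow> length b = length c
     \<and> (\<forall>i<length b. \<forall>j<length b. b ! i = b ! j \<longleftrightarrow> c ! i = c ! j)"

text \<open>Composition (H,c,d) \<cdot> (K,a,b) = (H\<cdot>K, a, d): identify c_i (of H) with b_i (of K).\<close>
definition comp_mapH :: "blg \<Rightarrow> blg \<Rightarrow> nat \<Rightarrow> nat" where
  "comp_mapH H K y = (if y \<in> set (bin H)
     then 2 * (bout K ! (SOME i. i < length (bin H) \<and> bin H ! i = y)) else 2 * y + 1)"

definition blg_comp :: "blg \<Rightarrow> blg \<Rightarrow> blg" where
  "blg_comp H K =
     \<lparr>bverts = (\<lambda>x. 2 * x) ` bverts K \<union> comp_mapH H K ` bverts H,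
      bedges = pmap (\<lambda>x. 2 * x) (bedges K) \<union> pmap (comp_mapH H K) (bedges H),
      bin = map (\<lambda>x. 2 * x) (bin K),
      bout = map (comp_mapH H K) (bout H)\<rparr>"

definition skew_graph_category :: "blg set \<Rightarrow> bool" where
  "skew_graph_category C \<longleftrightarrow>
     (\<forall>K\<in>C. wf_blg K)
   \<and> (\<forall>K\<in>C. \<forall>L. wf_blg L \<and> blg_iso K L \<longrightarrow> L \<in> C)
   \<and> blg_N0 \<in> C \<and> blg_M_id \<in> C \<and> blg_M_cup \<in> C
   \<and> (\<forall>K\<in>C. \<forall>H\<in>C. \<forall>f. vertex_overlap K H f \<longrightarrow> blg_union K f H \<in> C)
   \<and> (\<forall>K\<in>C. blg_inv K \<in> C)
   \<and> (\<forall>K\<in>C. \<forall>H\<in>C. same_pattern (bout K) (bin H) \<longrightarrow> blg_comp H K \<in> C)"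

text \<open>G: vertex set {..<n} (labels 1..n shifted to 0..n-1), edge set EG, symmetric,
  loops allowed. Linear maps (C^n)^{\<otimes>k} \<rightarrow> (C^n)^{\<otimes>l} are matrices indexed by
  (output multi-index j, input multi-index i), zero outside the index range.\<close>

definition tuples :: "nat \<Rightarrow> nat \<Rightarrow> nat list set" where
  "tuples n k = {xs. length xs = k \<and> set xs \<subseteq> {..<n}}"

type_synonym mat = "nat list \<Rightarrow> nat list \<Rightarrow> complex"

definition is_map :: "nat \<Rightarrow> nat \<Rightarrow> nat \<Rightarrow> mat \<Rightarrow> bool" where
  "is_map n k l T \<longleftrightarrow> (\<forall>j i. T j i \<noteq> 0 \<longrightarrow> j \<in> tuples n l \<and> i \<in> tuples n k)"

definition hatT :: "nat \<Rightarrow> (nat \<times> nat) set \<Rightarrow> blg \<Rightarrow> mat" where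
  "hatT n EG K = (\<lambda>j i. of_nat (card {\<phi> \<in> bverts K \<rightarrow>\<^sub>E {..<n}.
       inj_on \<phi> (bverts K) \<and> (\<forall>(x, y)\<in>bedges K. (\<phi> x, \<phi> y) \<in> EG)
       \<and> map \<phi> (bin K) = i \<and> map \<phi> (bout K) = j}))"

definition cspan :: "mat set \<Rightarrow> mat set" where
  "cspan S = {T. \<exists>F c. finite F \<and> F \<subseteq> S \<and> T = (\<lambda>j i. \<Sum>X\<in>F. c X * X j i)}"

definition graphC :: "nat \<Rightarrow> (nat \<times> nat) set \<Rightarrow> blg set \<Rightarrow> nat \<Rightarrow> nat \<Rightarrow> mat set" where
  "graphC n EG C k l = cspan {hatT n EG K | K. K \<in> C \<and> length (bin K) = k \<and> length (bout K) = l}"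

definition AutG :: "nat \<Rightarrow> (nat \<times> nat) set \<Rightarrow> (nat \<Rightarrow> nat) set" where
  "AutG n EG = {\<sigma>. \<sigma> permutes {..<n} \<and> (\<forall>x y. (x, y) \<in> EG \<longleftrightarrow> (\<sigma> x, \<sigma> y) \<in> EG)}"

fun red :: "nat list \<Rightarrow> nat list" where
  "red [] = []"
| "red (x # xs) = (case red xs of [] \<Rightarrow> [x] | y # ys \<Rightarrow> (if x = y then ys else x # y # ys))"

definition reduced :: "nat \<Rightarrow> nat list \<Rightarrow> bool" where
  "reduced n w \<longleftrightarrow> set w \<subseteq> {..<n} \<and> (\<forall>i. Suc i < length w \<longrightarrow> w ! i \<noteq> w ! Suc i)"

text \<open>Elements of Z_2^{*n} are reduced words; product = reduced concatenation, inverse = reversal.\<close>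
definition wmul :: "nat list \<Rightarrow> nat list \<Rightarrow> nat list" where
  "wmul v w = red (v @ w)"

definition normal_subgroup_Z2 :: "nat \<Rightarrow> nat list set \<Rightarrow> bool" where
  "normal_subgroup_Z2 n A \<longleftrightarrow> A \<subseteq> {w. reduced n w} \<and> [] \<in> A
     \<and> (\<forall>v\<in>A. \<forall>w\<in>A. wmul v w \<in> A) \<and> (\<forall>w\<in>A. rev w \<in> A)
     \<and> (\<forall>g. reduced n g \<longrightarrow> (\<forall>w\<in>A. wmul (wmul g w) (rev g) \<in> A))"

definition invariant_under :: "(nat \<Rightarrow> nat) set \<Rightarrow> nat list set \<Rightarrow> bool" where
  "invariant_under H A \<longleftrightarrow> (\<forall>\<sigma>\<in>H. \<forall>w\<in>A. map \<sigma> w \<in> A)"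

text \<open>Elements of \<Gamma> = Z_2^{*n}/A are the cosets (sets of reduced words); the coset of a word w.\<close>
definition gcls :: "nat \<Rightarrow> nat list set \<Rightarrow> nat list \<Rightarrow> nat list set" where
  "gcls n A w = {v. reduced n v \<and> red (v @ rev w) \<in> A}"

definition cmul :: "nat \<Rightarrow> nat list set \<Rightarrow> nat list set \<Rightarrow> nat list set \<Rightarrow> nat list set" where
  "cmul n A c1 c2 = gcls n A ((SOME w. w \<in> c1) @ (SOME w. w \<in> c2))"

text \<open>Group algebra C\<Gamma>: finitely supported functions on \<Gamma>, with convolution product.\<close>
type_synonym galg = "nat list set \<Rightarrow> complex"

definition ga_delta :: "nat list set \<Rightarrow> galg" where
  "ga_delta c = (\<lambda>d. if d = c then 1 else 0)"

definition ga_mul :: "nat \<Rightarrow> nat list set \<Rightarrow> galg \<Rightarrow> galg \<Rightarrow> galg" where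
  "ga_mul n A f g = (\<lambda>c. \<Sum>p\<in>{p \<in> {d. f d \<noteq> 0} \<times> {d. g d \<noteq> 0}. cmul n A (fst p) (snd p) = c}.
                          f (fst p) * g (snd p))"

text \<open>C\<Gamma> \<otimes> O(H) realised as functions H \<rightarrow> C\<Gamma> (only values on H matter);
  product is pointwise in \<sigma> and convolution in \<Gamma>.\<close>
type_synonym qalg = "(nat \<Rightarrow> nat) \<Rightarrow> galg"

definition qa_mul :: "nat \<Rightarrow> nat list set \<Rightarrow> qalg \<Rightarrow> qalg \<Rightarrow> qalg" where
  "qa_mul n A X Y = (\<lambda>\<sigma>. ga_mul n A (X \<sigma>) (Y \<sigma>))"

definition qa_one :: "nat \<Rightarrow> nat list set \<Rightarrow> qalg" where
  "qa_one n A = (\<lambda>\<sigma>. ga_delta (gcls n A []))"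

text \<open>Fundamental representation u_ij = \<gamma>_i \<otimes> v_ij with v_ij(\<sigma>) = \<delta>_{i,\<sigma>(j)}.\<close>
definition ufund :: "nat \<Rightarrow> nat list set \<Rightarrow> nat \<Rightarrow> nat \<Rightarrow> qalg" where
  "ufund n A i j = (\<lambda>\<sigma>. if i = \<sigma> j then ga_delta (gcls n A [i]) else (\<lambda>_. 0))"

fun utens :: "nat \<Rightarrow> nat list set \<Rightarrow> nat list \<Rightarrow> nat list \<Rightarrow> qalg" where
  "utens n A (p # ps) (i # is) = qa_mul n A (ufund n A p i) (utens n A ps is)"
| "utens n A _ _ = qa_one n A"

text \<open>Mor(u^{\<otimes>k}, u^{\<otimes>l}) = {T | T u^{\<otimes>k} = u^{\<otimes>l} T} in M(C\<Gamma> \<otimes> O(H)).\<close>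
definition Mor :: "nat \<Rightarrow> nat list set \<Rightarrow> (nat \<Rightarrow> nat) set \<Rightarrow> nat \<Rightarrow> nat \<Rightarrow> mat set" where
  "Mor n A H k l = {T. is_map n k l T \<and>
     (\<forall>\<sigma>\<in>H. \<forall>j\<in>tuples n l. \<forall>i\<in>tuples n k.
        (\<lambda>c. \<Sum>p\<in>tuples n k. T j p * utens n A p i \<sigma> c)
      = (\<lambda>c. \<Sum>q\<in>tuples n l. utens n A j q \<sigma> c * T q i))}"

end

theory Submission
  imports Defs
begin

definition stp :: "nat \<Rightarrow> nat list \<Rightarrow> nat list" where
  "stp x z = (case z of [] \<Rightarrow> [x] | y # ys \<Rightarrow> (if x = y then ys else x # y # ys))"

lemma red_Cons: "red (x # xs) = stp x (red xs)"
  by (simp add: stp_def)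

declare red.simps(2)[simp del]

fun nadj :: "nat list \<Rightarrow> bool" where
  "nadj (x # y # ys) = (x \<noteq> y \<and> nadj (y # ys))"
| "nadj _ = True"

lemma nadj_tl: "nadj (y # ys) \<Longrightarrow> nadj ys"
  by (cases ys) auto

lemma nadj_stp: "nadj z \<Longrightarrow> nadj (stp x z)"
  by (cases z) (auto simp: stp_def dest: nadj_tl)

lemma nadj_red: "nadj (red w)"
  by (induction w) (auto simp: red_Cons nadj_stp)

lemma red_nadj: "nadj w \<Longrightarrow> red w = w"
  by (induction w rule: nadj.induct) (auto simp: red_Cons stp_def)

lemma red_red[simp]: "red (red w) = red w"
  by (simp add: nadj_red red_nadj)

lemma stp_stp: "nadj z \<Longrightarrow> stp x (stp x z) = z"
  apply (cases z)
   apply (simp add: stp_def)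
  apply (rename_tac y ys)
  apply (case_tac ys)
   apply (auto simp: stp_def)
  done

lemma red_append_red2[simp]: "red (u @ red v) = red (u @ v)"
  by (induction u) (auto simp: red_Cons)

lemma red_stp_append: "nadj w \<Longrightarrow> red (stp x w @ v) = stp x (red (w @ v))"
  apply (cases w)
   apply (simp add: stp_def red_Cons)
  apply (auto simp: stp_def red_Cons)
  apply (metis nadj_red stp_stp stp_def)
  done

lemma red_append_red1[simp]: "red (red u @ v) = red (u @ v)"
  by (induction u) (auto simp: red_Cons red_stp_append nadj_red)

lemma red_mid[simp]: "red (u @ red v @ w) = red (u @ v @ w)"
  by (metis red_append_red1 red_append_red2)

lemma red_app_red2'[simp]: "red (u @ v @ red w) = red (u @ v @ w)"
  by (metis append_assoc red_append_red2)

lemma red_inv[simp]: "red (w @ rev w) = []"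
proof (induction w)
  case Nil then show ?case by simp
next
  case (Cons x w)
  have "red ((x # w) @ rev (x # w)) = stp x (red ((w @ rev w) @ [x]))"
    by (simp add: red_Cons)
  also have "red ((w @ rev w) @ [x]) = red (red (w @ rev w) @ [x])"
    by (simp only: red_append_red1)
  finally show ?case using Cons by (simp add: red_Cons stp_def)
qed

lemma red_inv2[simp]: "red (rev w @ w) = []"
  using red_inv[of "rev w"] by simp

lemma red_rev_red: "red (rev (red u)) = red (rev u)"
proof -
  have "red (rev (red u)) = red (red (rev u @ u) @ rev (red u))" by simp
  also have "\<dots> = red (rev u @ red (red u @ rev (red u)))"
    by (simp only: red_append_red1 red_append_red2 append_assoc)
  also have "\<dots> = red (rev u)" by simp
  finally show ?thesis .
qed

lemma red_cancel: "red (u @ rev v @ v @ w) = red (u @ w)"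
proof -
  have "red (u @ rev v @ v @ w) = red (u @ red (red (rev v @ v) @ w))"
    by (simp only: red_append_red1 red_append_red2 append_assoc)
  also have "\<dots> = red (u @ w)" by simp
  finally show ?thesis .
qed

lemma set_stp: "set (stp x z) \<subseteq> insert x (set z)"
  by (cases z) (auto simp: stp_def)

lemma set_red: "set (red w) \<subseteq> set w"
  apply (induction w)
   apply simp
  apply (simp add: red_Cons)
  using set_stp by blast

lemma nadj_iff: "nadj w \<longleftrightarrow> (\<forall>i. Suc i < length w \<longrightarrow> w ! i \<noteq> w ! Suc i)"
proof (induction w rule: nadj.induct)
  case (1 x y ys)
  show ?case
  proof
    assume h: "nadj (x # y # ys)"
    show "\<forall>i. Suc i < length (x # y # ys) \<longrightarrow> (x # y # ys) ! i \<noteq> (x # y # ys) ! Suc i"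
    proof (intro allI impI)
      fix i assume "Suc i < length (x # y # ys)"
      then show "(x # y # ys) ! i \<noteq> (x # y # ys) ! Suc i"
        using h 1 by (cases i) auto
    qed
  next
    assume h: "\<forall>i. Suc i < length (x # y # ys) \<longrightarrow> (x # y # ys) ! i \<noteq> (x # y # ys) ! Suc i"
    have "x \<noteq> y" using h[rule_format, of 0] by simp
    moreover have "nadj (y # ys)" using 1 h[rule_format, of "Suc _"] by auto
    ultimately show "nadj (x # y # ys)" by simp
  qed
qed auto

lemma reduced_iff: "reduced n w \<longleftrightarrow> set w \<subseteq> {..<n} \<and> nadj w"
  by (simp add: reduced_def nadj_iff)

lemma map_stp: "inj f \<Longrightarrow> map f (stp x z) = stp (f x) (map f z)"
  by (cases z) (auto simp: stp_def inj_eq)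

lemma red_map: "inj f \<Longrightarrow> red (map f w) = map f (red w)"
  by (induction w) (auto simp: red_Cons map_stp)


definition eqv :: "nat list set \<Rightarrow> nat list \<Rightarrow> nat list \<Rightarrow> bool" where
  "eqv A x y \<longleftrightarrow> red (x @ rev y) \<in> A"

locale NS =
  fixes n :: nat and A :: "nat list set"
  assumes ns: "normal_subgroup_Z2 n A"
begin

lemma A_red: "a \<in> A \<Longrightarrow> red a = a"
  using ns by (auto simp: normal_subgroup_Z2_def reduced_iff red_nadj)

lemma A_nil: "[] \<in> A"
  using ns by (auto simp: normal_subgroup_Z2_def)

lemma A_mul: "red u \<in> A \<Longrightarrow> red v \<in> A \<Longrightarrow> red (u @ v) \<in> A"
  using ns unfolding normal_subgroup_Z2_def wmul_def
  by (metis red_append_red1 red_append_red2)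

lemma A_rev: "red u \<in> A \<Longrightarrow> red (rev u) \<in> A"
proof -
  assume h: "red u \<in> A"
  then have r: "rev (red u) \<in> A" using ns by (auto simp: normal_subgroup_Z2_def)
  then have "red (rev (red u)) = rev (red u)" by (rule A_red)
  then show ?thesis using r red_rev_red by simp
qed

lemma A_conj: "set g \<subseteq> {..<n} \<Longrightarrow> red u \<in> A \<Longrightarrow> red (g @ u @ rev g) \<in> A"
proof -
  assume g: "set g \<subseteq> {..<n}" and u: "red u \<in> A"
  have "reduced n (red g)" using g set_red nadj_red reduced_iff by blast
  then have "wmul (wmul (red g) (red u)) (rev (red g)) \<in> A"
    using ns u by (auto simp: normal_subgroup_Z2_def)
  also have "wmul (wmul (red g) (red u)) (rev (red g)) = red (g @ u @ rev (red g))"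
    by (simp add: wmul_def)
  also have "\<dots> = red (g @ u @ rev g)" by (metis red_app_red2' red_rev_red)
  finally show ?thesis .
qed

lemma eqv_refl: "eqv A x x"
  by (simp add: eqv_def A_nil)

lemma eqv_sym: "eqv A x y \<Longrightarrow> eqv A y x"
  unfolding eqv_def using A_rev by fastforce

lemma eqv_trans: "eqv A x y \<Longrightarrow> eqv A y z \<Longrightarrow> eqv A x z"
proof -
  assume "eqv A x y" "eqv A y z"
  then have "red ((x @ rev y) @ (y @ rev z)) \<in> A" unfolding eqv_def by (rule A_mul)
  also have "red ((x @ rev y) @ (y @ rev z)) = red (x @ red (red (rev y @ y) @ rev z))"
    by (simp only: red_append_red1 red_append_red2 append_assoc)
  finally show ?thesis by (simp add: eqv_def)
qed

lemma eqv_app: "set a1 \<subseteq> {..<n} \<Longrightarrow> eqv A a1 b1 \<Longrightarrow> eqv A a2 b2 \<Longrightarrow> eqv A (a1 @ a2) (b1 @ b2)"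
proof -
  assume s: "set a1 \<subseteq> {..<n}" and e1: "eqv A a1 b1" and e2: "eqv A a2 b2"
  have "red ((a1 @ (a2 @ rev b2) @ rev a1) @ (a1 @ rev b1)) \<in> A"
    using A_mul A_conj s e1 e2 unfolding eqv_def by blast
  also have "red ((a1 @ (a2 @ rev b2) @ rev a1) @ (a1 @ rev b1))
     = red ((a1 @ a2 @ rev b2) @ rev a1 @ a1 @ rev b1)"
    by simp
  also have "\<dots> = red ((a1 @ a2 @ rev b2) @ rev b1)" by (rule red_cancel)
  finally show ?thesis by (simp add: eqv_def)
qed

lemma eqv_red: "eqv A x (red x)"
proof -
  have "red (x @ rev (red x)) = red (x @ red (rev (red x)))" by simp
  also have "\<dots> = []" by (simp only: red_rev_red red_append_red2 red_inv)
  finally show ?thesis by (simp add: eqv_def A_nil)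
qed

lemma gcls_sub: "eqv A x y \<Longrightarrow> gcls n A x \<subseteq> gcls n A y"
  unfolding gcls_def using eqv_trans by (auto simp: eqv_def)

lemma gcls_eq: "eqv A x y \<Longrightarrow> gcls n A x = gcls n A y"
  by (simp add: eqv_sym gcls_sub subset_antisym)

lemma red_in_gcls: "set x \<subseteq> {..<n} \<Longrightarrow> red x \<in> gcls n A x"
  unfolding gcls_def using eqv_red[of x] eqv_sym
  by (auto simp: reduced_iff nadj_red eqv_def A_nil dest: subsetD[OF set_red])

lemma gcls_eq_iff: "set x \<subseteq> {..<n} \<Longrightarrow> gcls n A x = gcls n A y \<longleftrightarrow> eqv A x y"
proof
  assume s: "set x \<subseteq> {..<n}" and e: "gcls n A x = gcls n A y"
  have "red x \<in> gcls n A y" using red_in_gcls[OF s] e by simp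
  then have "eqv A (red x) y" by (simp add: gcls_def eqv_def)
  then show "eqv A x y" using eqv_trans eqv_red by blast
qed (rule gcls_eq)

lemma cmul_gcls: "set u \<subseteq> {..<n} \<Longrightarrow> set w \<subseteq> {..<n} \<Longrightarrow>
   cmul n A (gcls n A u) (gcls n A w) = gcls n A (u @ w)"
proof -
  assume u: "set u \<subseteq> {..<n}" and w: "set w \<subseteq> {..<n}"
  define w1 where "w1 = (SOME v. v \<in> gcls n A u)"
  define w2 where "w2 = (SOME v. v \<in> gcls n A w)"
  have 1: "w1 \<in> gcls n A u" unfolding w1_def using red_in_gcls[OF u] by (rule someI)
  have 2: "w2 \<in> gcls n A w" unfolding w2_def using red_in_gcls[OF w] by (rule someI)
  have s1: "set w1 \<subseteq> {..<n}" using 1 by (simp add: gcls_def reduced_iff)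
  have "eqv A w1 u" "eqv A w2 w" using 1 2 by (simp_all add: gcls_def eqv_def)
  then have "eqv A (w1 @ w2) (u @ w)" using eqv_app s1 by blast
  then show ?thesis unfolding cmul_def w1_def[symmetric] w2_def[symmetric] by (rule gcls_eq)
qed

lemma ga_mul_delta: "ga_mul n A (ga_delta a) (ga_delta b) = ga_delta (cmul n A a b)"
proof
  fix c
  have s: "{d. ga_delta a d \<noteq> 0} = {a}" "{d. ga_delta b d \<noteq> 0} = {b}"
    by (auto simp: ga_delta_def)
  have t: "{p \<in> {a}\<times>{b}. cmul n A (fst p) (snd p) = c} = (if cmul n A a b = c then {(a,b)} else {})"
    by auto
  show "ga_mul n A (ga_delta a) (ga_delta b) c = ga_delta (cmul n A a b) c"
    unfolding ga_mul_def s t by (cases "cmul n A a b = c") (auto simp: ga_delta_def)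
qed

lemma ga_mul_zero1: "ga_mul n A (\<lambda>_. 0) g = (\<lambda>_. 0)"
  by (simp add: ga_mul_def)

lemma ga_mul_zero2: "ga_mul n A f (\<lambda>_. 0) = (\<lambda>_. 0)"
  by (simp add: ga_mul_def)

lemma utens_eq: "length p = length i \<Longrightarrow> set p \<subseteq> {..<n} \<Longrightarrow>
  utens n A p i \<sigma> = (if p = map \<sigma> i then ga_delta (gcls n A p) else (\<lambda>_. 0))"
proof (induction p i rule: list_induct2)
  case Nil then show ?case by (simp add: qa_one_def)
next
  case (Cons x xs y ys)
  have "utens n A (x # xs) (y # ys) \<sigma> = ga_mul n A (ufund n A x y \<sigma>) (utens n A xs ys \<sigma>)"
    by (simp add: qa_mul_def)
  also have "\<dots> = (if x # xs = map \<sigma> (y # ys) then ga_delta (gcls n A (x # xs)) else (\<lambda>_. 0))"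
    using Cons cmul_gcls[of "[x]" xs]
    by (auto simp: ufund_def ga_mul_delta ga_mul_zero1 ga_mul_zero2)
  finally show ?case .
qed

end


lemma finite_tuples: "finite (tuples n k)"
proof -
  have "tuples n k = {xs. set xs \<subseteq> {..<n} \<and> length xs = k}" by (auto simp: tuples_def)
  then show ?thesis using finite_lists_length_eq[of "{..<n}" k] by simp
qed

locale GA = NS +
  fixes EG :: "(nat \<times> nat) set"
  assumes EGsub: "EG \<subseteq> {..<n} \<times> {..<n}" and symEG: "sym EG"
    and invA: "invariant_under (AutG n EG) A"
begin

lemma aut_perm: "\<sigma> \<in> AutG n EG \<Longrightarrow> \<sigma> permutes {..<n}"
  by (simp add: AutG_def)

lemma aut_inj: "\<sigma> \<in> AutG n EG \<Longrightarrow> inj \<sigma>"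
  using aut_perm permutes_inj by blast

lemma aut_lt: "\<sigma> \<in> AutG n EG \<Longrightarrow> \<sigma> x < n \<longleftrightarrow> x < n"
  using permutes_in_image[OF aut_perm] by simp

lemma aut_edge: "\<sigma> \<in> AutG n EG \<Longrightarrow> (\<sigma> x, \<sigma> y) \<in> EG \<longleftrightarrow> (x, y) \<in> EG"
  by (simp add: AutG_def)

lemma map_tuples: "\<sigma> \<in> AutG n EG \<Longrightarrow> map \<sigma> x \<in> tuples n k \<longleftrightarrow> x \<in> tuples n k"
  using aut_lt by (auto simp: tuples_def)

lemma inv_aut: "\<sigma> \<in> AutG n EG \<Longrightarrow> inv \<sigma> \<in> AutG n EG"
proof -
  assume s: "\<sigma> \<in> AutG n EG"
  have p: "\<sigma> permutes {..<n}" using s by (rule aut_perm)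
  have "(x, y) \<in> EG \<longleftrightarrow> (inv \<sigma> x, inv \<sigma> y) \<in> EG" for x y
    using aut_edge[OF s, of "inv \<sigma> x" "inv \<sigma> y"] permutes_inverses(1)[OF p] by simp
  then show ?thesis using permutes_inv[OF p] by (simp add: AutG_def)
qed

lemma id_aut: "id \<in> AutG n EG"
  by (simp add: AutG_def permutes_id)

lemma map_inv_map: "\<sigma> \<in> AutG n EG \<Longrightarrow> map (inv \<sigma>) (map \<sigma> x) = x"
  using permutes_inverses(2)[OF aut_perm] by (simp add: map_idI)

lemma map_map_inv: "\<sigma> \<in> AutG n EG \<Longrightarrow> map \<sigma> (map (inv \<sigma>) x) = x"
  using permutes_inverses(1)[OF aut_perm] by (simp add: map_idI)

lemma mor_eq:
  assumes s: "\<sigma> \<in> AutG n EG" and j: "j \<in> tuples n l" and i: "i \<in> tuples n k"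
  shows "((\<lambda>c. \<Sum>p\<in>tuples n k. T j p * utens n A p i \<sigma> c)
      = (\<lambda>c. \<Sum>q\<in>tuples n l. utens n A j q \<sigma> c * T q i))
    \<longleftrightarrow> (\<forall>c. T j (map \<sigma> i) * ga_delta (gcls n A (map \<sigma> i)) c
             = ga_delta (gcls n A j) c * T (map (inv \<sigma>) j) i)"
proof -
  have mi: "map \<sigma> i \<in> tuples n k" using map_tuples[OF s] i by simp
  have mj: "map (inv \<sigma>) j \<in> tuples n l" using map_tuples[OF inv_aut[OF s]] j by simp
  have L: "(\<Sum>p\<in>tuples n k. T j p * utens n A p i \<sigma> c) = T j (map \<sigma> i) * ga_delta (gcls n A (map \<sigma> i)) c" for c
  proof -
    have "(\<Sum>p\<in>tuples n k. T j p * utens n A p i \<sigma> c)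
        = (\<Sum>p\<in>tuples n k. if p = map \<sigma> i then T j p * ga_delta (gcls n A p) c else 0)"
      using i by (intro sum.cong refl) (auto simp: utens_eq tuples_def)
    also have "\<dots> = T j (map \<sigma> i) * ga_delta (gcls n A (map \<sigma> i)) c"
      using mi by (simp add: sum.delta finite_tuples)
    finally show ?thesis .
  qed
  have R: "(\<Sum>q\<in>tuples n l. utens n A j q \<sigma> c * T q i) = ga_delta (gcls n A j) c * T (map (inv \<sigma>) j) i" for c
  proof -
    have e: "j = map \<sigma> q \<longleftrightarrow> q = map (inv \<sigma>) j" for q
      using map_inv_map[OF s] map_map_inv[OF s] by metis
    have "(\<Sum>q\<in>tuples n l. utens n A j q \<sigma> c * T q i)
        = (\<Sum>q\<in>tuples n l. if q = map (inv \<sigma>) j then ga_delta (gcls n A j) c * T q i else 0)"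
      using j by (intro sum.cong refl) (auto simp: utens_eq tuples_def e)
    also have "\<dots> = ga_delta (gcls n A j) c * T (map (inv \<sigma>) j) i"
      using mj by (simp add: sum.delta finite_tuples)
    finally show ?thesis .
  qed
  show ?thesis using L R by (simp add: fun_eq_iff)
qed

lemma delta_cond: "(\<forall>c. a * ga_delta X c = ga_delta Y c * b) \<longleftrightarrow> (a = b \<and> (a \<noteq> 0 \<longrightarrow> X = Y))"
  apply (cases "X = Y")
   apply (auto simp: ga_delta_def)
  done

lemma tuples_set: "x \<in> tuples n k \<Longrightarrow> set x \<subseteq> {..<n}"
  by (simp add: tuples_def)

lemma Mor_char: "T \<in> Mor n A (AutG n EG) k l \<longleftrightarrow>
   is_map n k l T \<and> (\<forall>\<sigma>\<in>AutG n EG. \<forall>j i. T (map \<sigma> j) (map \<sigma> i) = T j i)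
   \<and> (\<forall>j i. T j i \<noteq> 0 \<longrightarrow> eqv A i j)"
proof -
  have M: "T \<in> Mor n A (AutG n EG) k l \<longleftrightarrow> is_map n k l T \<and>
     (\<forall>\<sigma>\<in>AutG n EG. \<forall>j\<in>tuples n l. \<forall>i\<in>tuples n k.
        T j (map \<sigma> i) = T (map (inv \<sigma>) j) i \<and>
        (T j (map \<sigma> i) \<noteq> 0 \<longrightarrow> gcls n A (map \<sigma> i) = gcls n A j))"
    unfolding Mor_def using mor_eq delta_cond by simp
  show ?thesis
  proof
    assume "T \<in> Mor n A (AutG n EG) k l"
    then have im: "is_map n k l T" and
      H: "\<And>\<sigma> j i. \<sigma>\<in>AutG n EG \<Longrightarrow> j\<in>tuples n l \<Longrightarrow> i\<in>tuples n k \<Longrightarrow>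
        T j (map \<sigma> i) = T (map (inv \<sigma>) j) i \<and>
        (T j (map \<sigma> i) \<noteq> 0 \<longrightarrow> gcls n A (map \<sigma> i) = gcls n A j)"
      using M by blast+
    have inv: "T (map \<sigma> j) (map \<sigma> i) = T j i" if s: "\<sigma>\<in>AutG n EG" for \<sigma> j i
    proof (cases "j \<in> tuples n l \<and> i \<in> tuples n k")
      case True
      then have "map \<sigma> j \<in> tuples n l" using map_tuples[OF s] by simp
      then show ?thesis using H[OF s _ conjunct2[OF True]] map_inv_map[OF s] by metis
    next
      case False
      then have "T j i = 0" "T (map \<sigma> j) (map \<sigma> i) = 0"
        using im map_tuples[OF s] unfolding is_map_def by blast+
      then show ?thesis by simp
    qed
    have sup: "eqv A i j" if nz: "T j i \<noteq> 0" for j i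
    proof -
      have t: "j \<in> tuples n l" "i \<in> tuples n k" using im nz unfolding is_map_def by blast+
      have "gcls n A i = gcls n A j" using H[OF id_aut t] nz by simp
      then show ?thesis using gcls_eq_iff tuples_set[OF t(2)] by blast
    qed
    show "is_map n k l T \<and> (\<forall>\<sigma>\<in>AutG n EG. \<forall>j i. T (map \<sigma> j) (map \<sigma> i) = T j i)
      \<and> (\<forall>j i. T j i \<noteq> 0 \<longrightarrow> eqv A i j)" using im inv sup by blast
  next
    assume h: "is_map n k l T \<and> (\<forall>\<sigma>\<in>AutG n EG. \<forall>j i. T (map \<sigma> j) (map \<sigma> i) = T j i)
      \<and> (\<forall>j i. T j i \<noteq> 0 \<longrightarrow> eqv A i j)"
    have "T j (map \<sigma> i) = T (map (inv \<sigma>) j) i \<and>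
        (T j (map \<sigma> i) \<noteq> 0 \<longrightarrow> gcls n A (map \<sigma> i) = gcls n A j)"
      if s: "\<sigma>\<in>AutG n EG" and j: "j\<in>tuples n l" and i: "i\<in>tuples n k" for \<sigma> j i
    proof
      show e: "T j (map \<sigma> i) = T (map (inv \<sigma>) j) i"
        using h s map_map_inv[OF s, of j] by metis
      show "T j (map \<sigma> i) \<noteq> 0 \<longrightarrow> gcls n A (map \<sigma> i) = gcls n A j"
        using h gcls_eq by blast
    qed
    then show "T \<in> Mor n A (AutG n EG) k l" using M h by blast
  qed
qed

end


definition homs :: "nat \<Rightarrow> (nat \<times> nat) set \<Rightarrow> nat set \<Rightarrow> (nat \<times> nat) set \<Rightarrow> (nat \<Rightarrow> nat) set" where
  "homs n EG V E = {\<phi> \<in> V \<rightarrow>\<^sub>E {..<n}. inj_on \<phi> V \<and> (\<forall>(x, y)\<in>E. (\<phi> x, \<phi> y) \<in> EG)}"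

lemma finite_homs: "finite V \<Longrightarrow> finite (homs n EG V E)"
  by (rule finite_subset[of _ "V \<rightarrow>\<^sub>E {..<n}"]) (auto simp: homs_def finite_PiE)

lemma hatT_homs: "hatT n EG K j i = of_nat (card {\<phi> \<in> homs n EG (bverts K) (bedges K).
     map \<phi> (bin K) = i \<and> map \<phi> (bout K) = j})"
  unfolding hatT_def homs_def by (simp add: conj_assoc)

lemma hatT_sum: "finite (bverts K) \<Longrightarrow> hatT n EG K j i = (\<Sum>\<phi>\<in>homs n EG (bverts K) (bedges K).
     if map \<phi> (bin K) = i \<and> map \<phi> (bout K) = j then 1 else 0)"
  unfolding hatT_homs by (simp add: sum.If_cases finite_homs Int_def)

definition CC :: "nat \<Rightarrow> (nat \<times> nat) set \<Rightarrow> nat list set \<Rightarrow> blg set" where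
  "CC n EG A = {K. wf_blg K \<and> (\<forall>\<phi>\<in>homs n EG (bverts K) (bedges K).
      eqv A (map \<phi> (bin K)) (map \<phi> (bout K)))}"

lemma cspan_sum: "finite I \<Longrightarrow> (\<And>x. x \<in> I \<Longrightarrow> g x \<in> S) \<Longrightarrow>
   (\<lambda>j i. \<Sum>x\<in>I. a x * g x j i) \<in> cspan S"
proof -
  assume I: "finite I" and g: "\<And>x. x \<in> I \<Longrightarrow> g x \<in> S"
  define c where "c X = (\<Sum>x\<in>{x\<in>I. g x = X}. a x)" for X
  have "(\<Sum>x\<in>I. a x * g x j i) = (\<Sum>X\<in>g ` I. c X * X j i)" for j i
  proof -
    have "(\<Sum>x\<in>I. a x * g x j i) = (\<Sum>X\<in>g ` I. \<Sum>x\<in>{x\<in>I. g x = X}. a x * g x j i)"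
      using I by (rule sum.image_gen)
    also have "\<dots> = (\<Sum>X\<in>g ` I. c X * X j i)"
      unfolding c_def sum_distrib_right by (intro sum.cong refl) auto
    finally show ?thesis .
  qed
  then show ?thesis unfolding cspan_def using I g
    by (intro CollectI exI[of _ "g ` I"] exI[of _ c]) auto
qed

context GA
begin

lemma comp_homs:
  assumes s: "\<sigma> \<in> AutG n EG" and V: "E \<subseteq> V \<times> V" and \<phi>: "\<phi> \<in> homs n EG V E"
  shows "restrict (\<sigma> \<circ> \<phi>) V \<in> homs n EG V E"
proof -
  have "inj_on (\<sigma> \<circ> \<phi>) V" using \<phi> aut_inj[OF s] by (auto simp: homs_def intro: comp_inj_on inj_on_subset)
  then have "inj_on (restrict (\<sigma> \<circ> \<phi>) V) V" by (simp add: inj_on_def)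
  moreover have "restrict (\<sigma> \<circ> \<phi>) V \<in> V \<rightarrow>\<^sub>E {..<n}" using \<phi> aut_lt[OF s] by (auto simp: homs_def)
  moreover have "\<forall>(x, y)\<in>E. (restrict (\<sigma> \<circ> \<phi>) V x, restrict (\<sigma> \<circ> \<phi>) V y) \<in> EG"
    using \<phi> V aut_edge[OF s] by (auto simp: homs_def)
  ultimately show ?thesis by (simp add: homs_def)
qed

lemma hatT_inv:
  assumes K: "wf_blg K" and s: "\<sigma> \<in> AutG n EG"
  shows "hatT n EG K (map \<sigma> j) (map \<sigma> i) = hatT n EG K j i"
proof -
  let ?H = "homs n EG (bverts K) (bedges K)"
  let ?V = "bverts K"
  define S1 where "S1 = {\<phi> \<in> ?H. map \<phi> (bin K) = i \<and> map \<phi> (bout K) = j}"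
  define S2 where "S2 = {\<phi> \<in> ?H. map \<phi> (bin K) = map \<sigma> i \<and> map \<phi> (bout K) = map \<sigma> j}"
  have V: "bedges K \<subseteq> ?V \<times> ?V" "set (bin K) \<subseteq> ?V" "set (bout K) \<subseteq> ?V" using K by (auto simp: wf_blg_def)
  have si: "inv \<sigma> \<in> AutG n EG" using s by (rule inv_aut)
  have mr: "map (restrict f ?V) xs = map f xs" if "set xs \<subseteq> ?V" for f xs
    using that by (auto intro: map_cong)
  have "bij_betw (\<lambda>\<phi>. restrict (\<sigma> \<circ> \<phi>) ?V) S1 S2"
  proof (rule bij_betw_byWitness[where f'="\<lambda>\<phi>. restrict (inv \<sigma> \<circ> \<phi>) ?V"])
    show "\<forall>a\<in>S1. restrict (inv \<sigma> \<circ> restrict (\<sigma> \<circ> a) ?V) ?V = a"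
      using permutes_inverses(2)[OF aut_perm[OF s]]
      by (auto simp: S1_def homs_def fun_eq_iff PiE_def extensional_def)
    show "\<forall>a\<in>S2. restrict (\<sigma> \<circ> restrict (inv \<sigma> \<circ> a) ?V) ?V = a"
      using permutes_inverses(1)[OF aut_perm[OF s]]
      by (auto simp: S2_def homs_def fun_eq_iff PiE_def extensional_def)
    show "(\<lambda>\<phi>. restrict (\<sigma> \<circ> \<phi>) ?V) ` S1 \<subseteq> S2"
      using comp_homs[OF s V(1)] V mr by (auto simp: S1_def S2_def)
    show "(\<lambda>\<phi>. restrict (inv \<sigma> \<circ> \<phi>) ?V) ` S2 \<subseteq> S1"
    proof
      fix \<psi> assume "\<psi> \<in> (\<lambda>\<phi>. restrict (inv \<sigma> \<circ> \<phi>) ?V) ` S2"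
      then obtain \<phi> where p: "\<phi> \<in> S2" and q: "\<psi> = restrict (inv \<sigma> \<circ> \<phi>) ?V" by blast
      have "map \<psi> (bin K) = map (inv \<sigma>) (map \<phi> (bin K))"
        by (simp only: q mr[OF V(2)] map_map)
      also have "\<dots> = i" using p map_inv_map[OF s] by (simp add: S2_def)
      finally have 1: "map \<psi> (bin K) = i" .
      have "map \<psi> (bout K) = map (inv \<sigma>) (map \<phi> (bout K))"
        by (simp only: q mr[OF V(3)] map_map)
      also have "\<dots> = j" using p map_inv_map[OF s] by (simp add: S2_def)
      finally have 2: "map \<psi> (bout K) = j" .
      have "\<psi> \<in> homs n EG (bverts K) (bedges K)" using p q comp_homs[OF si V(1)] by (simp add: S2_def)
      then show "\<psi> \<in> S1" using 1 2 by (simp add: S1_def)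
    qed
  qed
  then have "card S1 = card S2" by (rule bij_betw_same_card)
  then show ?thesis unfolding hatT_homs S1_def S2_def by simp
qed

lemma hatT_Mor:
  assumes K: "K \<in> CC n EG A" and k: "length (bin K) = k" and l: "length (bout K) = l"
  shows "hatT n EG K \<in> Mor n A (AutG n EG) k l"
proof -
  have wf: "wf_blg K" using K by (simp add: CC_def)
  have ne: "\<exists>\<phi>\<in>homs n EG (bverts K) (bedges K). map \<phi> (bin K) = i \<and> map \<phi> (bout K) = j"
    if "hatT n EG K j i \<noteq> 0" for j i
    using that unfolding hatT_homs by (metis (mono_tags, lifting) card.empty empty_Collect_eq of_nat_0)
  have "is_map n k l (hatT n EG K)"
    unfolding is_map_def
  proof (intro allI impI)
    fix j i assume "hatT n EG K j i \<noteq> 0"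
    then obtain \<phi> where \<phi>: "\<phi>\<in>homs n EG (bverts K) (bedges K)" "map \<phi> (bin K) = i" "map \<phi> (bout K) = j"
      using ne by blast
    then show "j \<in> tuples n l \<and> i \<in> tuples n k" using wf k l
      apply (auto simp: tuples_def homs_def wf_blg_def PiE_def Pi_def)
      apply blast+
      done
  qed
  moreover have "\<forall>\<sigma>\<in>AutG n EG. \<forall>j i. hatT n EG K (map \<sigma> j) (map \<sigma> i) = hatT n EG K j i"
    using hatT_inv wf by blast
  moreover have "\<forall>j i. hatT n EG K j i \<noteq> 0 \<longrightarrow> eqv A i j"
    using ne K by (auto simp: CC_def)
  ultimately show ?thesis by (simp add: Mor_char)
qed

lemma Mor_cspan: "S \<subseteq> Mor n A (AutG n EG) k l \<Longrightarrow> cspan S \<subseteq> Mor n A (AutG n EG) k l"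
proof
  fix T assume S: "S \<subseteq> Mor n A (AutG n EG) k l" and "T \<in> cspan S"
  then obtain F c where F: "finite F" "F \<subseteq> S" and T: "T = (\<lambda>j i. \<Sum>X\<in>F. c X * X j i)"
    by (auto simp: cspan_def)
  have XM: "X \<in> Mor n A (AutG n EG) k l" if "X \<in> F" for X using that F S by blast
  have nz: "\<exists>X\<in>F. X j i \<noteq> 0" if "T j i \<noteq> 0" for j i
    using that unfolding T by (metis (mono_tags, lifting) mult_zero_right sum.neutral)
  have "is_map n k l T" unfolding is_map_def
    using nz XM by (metis Mor_char is_map_def)
  moreover have "\<forall>\<sigma>\<in>AutG n EG. \<forall>j i. T (map \<sigma> j) (map \<sigma> i) = T j i"
    unfolding T using XM Mor_char by (auto intro!: sum.cong)
  moreover have "\<forall>j i. T j i \<noteq> 0 \<longrightarrow> eqv A i j"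
    using nz XM Mor_char by blast
  ultimately show "T \<in> Mor n A (AutG n EG) k l" by (simp add: Mor_char)
qed


lemma eqv_map: "eqv A x y \<Longrightarrow> \<sigma> \<in> AutG n EG \<Longrightarrow> eqv A (map \<sigma> x) (map \<sigma> y)"
proof -
  assume e: "eqv A x y" and s: "\<sigma> \<in> AutG n EG"
  have "red (map \<sigma> x @ rev (map \<sigma> y)) = map \<sigma> (red (x @ rev y))"
    using red_map[OF aut_inj[OF s], of "x @ rev y"] by (simp add: rev_map)
  then show ?thesis using e s invA by (simp add: eqv_def invariant_under_def)
qed

lemma ext_aut:
  assumes \<phi>: "\<phi> \<in> homs n EG {..<n} EG"
  shows "(\<lambda>x. if x < n then \<phi> x else x) \<in> AutG n EG"
proof -
  define \<sigma> where "\<sigma> = (\<lambda>x. if x < n then \<phi> x else x)"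
  have inj\<phi>: "inj_on \<phi> {..<n}" and im: "\<phi> ` {..<n} \<subseteq> {..<n}" and ed: "\<And>x y. (x,y) \<in> EG \<Longrightarrow> (\<phi> x, \<phi> y) \<in> EG"
    using \<phi> by (auto simp: homs_def PiE_def Pi_def)
  have "\<phi> ` {..<n} = {..<n}" using endo_inj_surj[OF _ im inj\<phi>] by simp
  then have "bij_betw \<phi> {..<n} {..<n}" using inj\<phi> by (simp add: bij_betw_def)
  then have "bij_betw \<sigma> {..<n} {..<n}" by (rule bij_betw_cong[THEN iffD1, rotated]) (simp add: \<sigma>_def)
  then have p: "\<sigma> permutes {..<n}" by (rule bij_imp_permutes) (simp add: \<sigma>_def)
  have fw: "(x,y) \<in> EG \<Longrightarrow> (\<sigma> x, \<sigma> y) \<in> EG" for x y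
    using ed EGsub by (auto simp: \<sigma>_def)
  define f where "f = (\<lambda>(x, y). (\<sigma> x, \<sigma> y))"
  have injf: "inj f" using permutes_inj[OF p] by (auto simp: f_def inj_def)
  have finEG: "finite EG" using EGsub finite_subset by blast
  have "f ` EG \<subseteq> EG" using fw by (auto simp: f_def)
  moreover have "card (f ` EG) = card EG" using injf by (simp add: card_image inj_on_subset)
  ultimately have fE: "f ` EG = EG" using finEG by (simp add: card_subset_eq)
  have "(x, y) \<in> EG \<longleftrightarrow> (\<sigma> x, \<sigma> y) \<in> EG" for x y
  proof
    assume "(\<sigma> x, \<sigma> y) \<in> EG"
    then have "f (x, y) \<in> f ` EG" using fE by (simp add: f_def)
    then show "(x, y) \<in> EG" using injf by (simp add: inj_image_mem_iff)
  qed (rule fw)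
  then show ?thesis using p by (simp add: AutG_def \<sigma>_def)
qed

definition Kg :: "nat list \<Rightarrow> nat list \<Rightarrow> blg" where
  "Kg j i = \<lparr>bverts = {..<n}, bedges = EG, bin = i, bout = j\<rparr>"

lemma Mor_sub:
  assumes T: "T \<in> Mor n A (AutG n EG) k l"
  shows "T \<in> graphC n EG (CC n EG A) k l"
proof -
  have im: "is_map n k l T" and inv: "\<And>\<sigma> j i. \<sigma>\<in>AutG n EG \<Longrightarrow> T (map \<sigma> j) (map \<sigma> i) = T j i"
    and sup: "\<And>j i. T j i \<noteq> 0 \<Longrightarrow> eqv A i j" using T Mor_char by blast+
  define E where "E = homs n EG {..<n} EG"
  have finE: "finite E" unfolding E_def by (simp add: finite_homs)
  have "restrict id {..<n} \<in> E" using EGsub by (auto simp: E_def homs_def inj_on_def)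
  then have cE: "card E > 0" using finE card_gt_0_iff by blast
  define P where "P = tuples n l \<times> tuples n k"
  define I where "I = {x\<in>P. T (fst x) (snd x) \<noteq> 0}"
  have finP: "finite P" by (simp add: P_def finite_tuples)
  have finI: "finite I" using finP by (simp add: I_def)
  define a where "a x = T (fst x) (snd x) / of_nat (card E)" for x
  define g where "g x = hatT n EG (Kg (fst x) (snd x))" for x
  have mapext: "map \<phi> xs = map (\<lambda>x. if x < n then \<phi> x else x) xs" if "set xs \<subseteq> {..<n}" for \<phi> xs
    using that by (auto intro: map_cong)
  have gS: "g x \<in> {hatT n EG K | K. K \<in> CC n EG A \<and> length (bin K) = k \<and> length (bout K) = l}"
    if x: "x \<in> I" for x
  proof -
    obtain j i where xe: "x = (j, i)" by (cases x)
    have t: "j \<in> tuples n l" "i \<in> tuples n k" and nz: "T j i \<noteq> 0" using x xe by (auto simp: I_def P_def)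
    have wf: "wf_blg (Kg j i)" using t EGsub symEG by (auto simp: Kg_def wf_blg_def tuples_def)
    have "eqv A (map \<phi> i) (map \<phi> j)" if "\<phi> \<in> E" for \<phi>
    proof -
      have "eqv A (map (\<lambda>x. if x < n then \<phi> x else x) i) (map (\<lambda>x. if x < n then \<phi> x else x) j)"
        using eqv_map[OF sup[OF nz] ext_aut[of \<phi>]] that by (simp add: E_def)
      then show ?thesis using mapext[OF tuples_set[OF t(1)], of \<phi>] mapext[OF tuples_set[OF t(2)], of \<phi>]
        by metis
    qed
    then have "Kg j i \<in> CC n EG A" using wf by (simp add: CC_def Kg_def E_def)
    then show ?thesis using t by (auto simp: g_def xe Kg_def tuples_def)
  qed
  have key: "T j' i' = (\<Sum>x\<in>I. a x * g x j' i')" for j' i'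
  proof -
    have "(\<Sum>x\<in>I. a x * g x j' i') = (\<Sum>x\<in>P. a x * g x j' i')"
      by (rule sum.mono_neutral_left) (auto simp: finP I_def a_def)
    also have "\<dots> = (\<Sum>x\<in>P. \<Sum>\<phi>\<in>E. if map \<phi> (snd x) = i' \<and> map \<phi> (fst x) = j' then a x else 0)"
      by (intro sum.cong refl) (simp add: g_def hatT_sum Kg_def E_def sum_distrib_left if_distrib cong: if_cong)
    also have "\<dots> = (\<Sum>\<phi>\<in>E. \<Sum>x\<in>P. if map \<phi> (snd x) = i' \<and> map \<phi> (fst x) = j' then a x else 0)"
      by (rule sum.swap)
    also have "\<dots> = (\<Sum>\<phi>\<in>E. T j' i' / of_nat (card E))"
    proof (intro sum.cong refl)
      fix \<phi> assume \<phi>: "\<phi> \<in> E"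
      define \<sigma> where "\<sigma> = (\<lambda>x. if x < n then \<phi> x else x)"
      have s: "\<sigma> \<in> AutG n EG" using ext_aut \<phi> by (simp add: E_def \<sigma>_def)
      define x0 where "x0 = (map (inv \<sigma>) j', map (inv \<sigma>) i')"
      have c: "(map \<phi> (snd x) = i' \<and> map \<phi> (fst x) = j') \<longleftrightarrow> x = x0" if "x \<in> P" for x
      proof -
        have h: "map \<phi> (snd x) = map \<sigma> (snd x)" "map \<phi> (fst x) = map \<sigma> (fst x)"
          unfolding \<sigma>_def using that mapext[OF tuples_set[of "snd x" k]] mapext[OF tuples_set[of "fst x" l]]
          by (auto simp: P_def mem_Times_iff)
        have e: "\<And>u v. map \<sigma> u = v \<longleftrightarrow> u = map (inv \<sigma>) v"
          using map_inv_map[OF s] map_map_inv[OF s] by metis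
        show ?thesis unfolding h e x0_def by (cases x) auto
      qed
      have "(\<Sum>x\<in>P. if map \<phi> (snd x) = i' \<and> map \<phi> (fst x) = j' then a x else 0)
          = (\<Sum>x\<in>P. if x = x0 then a x else 0)"
        using c by (intro sum.cong refl) auto
      also have "\<dots> = (if x0 \<in> P then a x0 else 0)" using finP by (simp add: sum.delta)
      also have "\<dots> = T j' i' / of_nat (card E)"
      proof (cases "x0 \<in> P")
        case True
        have "T j' i' = T (map \<sigma> (map (inv \<sigma>) j')) (map \<sigma> (map (inv \<sigma>) i'))"
          using map_map_inv[OF s] by simp
        also have "\<dots> = T (map (inv \<sigma>) j') (map (inv \<sigma>) i')" by (rule inv[OF s])
        finally show ?thesis using True by (simp add: a_def x0_def)
      next
        case False
        then have "\<not> (j' \<in> tuples n l \<and> i' \<in> tuples n k)"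
          using map_tuples[OF inv_aut[OF s]] by (auto simp: x0_def P_def)
        then have "T j' i' = 0" using im by (auto simp: is_map_def)
        then show ?thesis using False by simp
      qed
      finally show "(\<Sum>x\<in>P. if map \<phi> (snd x) = i' \<and> map \<phi> (fst x) = j' then a x else 0)
          = T j' i' / of_nat (card E)" .
    qed
    also have "\<dots> = T j' i'" using cE by simp
    finally show ?thesis by simp
  qed
  have "(\<lambda>j i. \<Sum>x\<in>I. a x * g x j i) \<in> cspan {hatT n EG K | K. K \<in> CC n EG A \<and> length (bin K) = k \<and> length (bout K) = l}"
    using finI gS by (rule cspan_sum)
  moreover have "T = (\<lambda>j i. \<Sum>x\<in>I. a x * g x j i)" using key by (simp add: fun_eq_iff)
  ultimately show ?thesis by (simp add: graphC_def)
qed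


lemma homs_pull:
  assumes \<phi>: "\<phi> \<in> homs n EG V' E'" and h: "h ` V \<subseteq> V'" "inj_on h V"
    and E: "E \<subseteq> V \<times> V" and he: "\<And>x y. (x, y) \<in> E \<Longrightarrow> (h x, h y) \<in> E'"
  shows "restrict (\<phi> \<circ> h) V \<in> homs n EG V E"
proof -
  have "inj_on (\<phi> \<circ> h) V" using \<phi> h by (auto simp: homs_def intro: comp_inj_on inj_on_subset)
  then have "inj_on (restrict (\<phi> \<circ> h) V) V" by (simp add: inj_on_def)
  moreover have "restrict (\<phi> \<circ> h) V \<in> V \<rightarrow>\<^sub>E {..<n}" using \<phi> h by (auto simp: homs_def PiE_def Pi_def)
  moreover have "\<forall>(x, y)\<in>E. (restrict (\<phi> \<circ> h) V x, restrict (\<phi> \<circ> h) V y) \<in> EG"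
    using \<phi> E he by (fastforce simp: homs_def)
  ultimately show ?thesis by (simp add: homs_def)
qed

lemma map_restrict: "set xs \<subseteq> V \<Longrightarrow> map (restrict (\<phi> \<circ> h) V) xs = map \<phi> (map h xs)"
  by (auto intro: map_cong)

lemma homs_set: "\<phi> \<in> homs n EG V E \<Longrightarrow> set xs \<subseteq> V \<Longrightarrow> set (map \<phi> xs) \<subseteq> {..<n}"
  by (auto simp: homs_def PiE_def Pi_def)

lemma sym_pmap: "sym E \<Longrightarrow> sym (pmap g E)"
  unfolding sym_def pmap_def by auto

lemma union_mapH_inj: "vertex_overlap K H f \<Longrightarrow> inj_on (union_mapH f) (bverts H)"
proof (rule inj_onI)
  fix y1 y2 assume vo: "vertex_overlap K H f" and "y1 \<in> bverts H" "y2 \<in> bverts H"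
    and e: "union_mapH f y1 = union_mapH f y2"
  have ov: "\<And>a b c d. (a, b) \<in> f \<Longrightarrow> (c, d) \<in> f \<Longrightarrow> a = c \<longleftrightarrow> b = d"
    using vo unfolding vertex_overlap_def by blast
  show "y1 = y2"
  proof (cases "\<exists>x. (x, y1) \<in> f")
    case c1: True
    then have m1: "(SOME x. (x, y1) \<in> f, y1) \<in> f" by (rule someI_ex)
    show ?thesis
    proof (cases "\<exists>x. (x, y2) \<in> f")
      case c2: True
      then have m2: "(SOME x. (x, y2) \<in> f, y2) \<in> f" by (rule someI_ex)
      have "(SOME x. (x, y1) \<in> f) = (SOME x. (x, y2) \<in> f)" using e c1 c2 by (simp add: union_mapH_def)
      then show ?thesis using ov[OF m1 m2] by simp
    next
      case False
      then show ?thesis using e c1 by (simp add: union_mapH_def) presburger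
    qed
  next
    case c1: False
    show ?thesis
    proof (cases "\<exists>x. (x, y2) \<in> f")
      case True
      then show ?thesis using e c1 by (simp add: union_mapH_def) presburger
    next
      case False
      then show ?thesis using e c1 by (simp add: union_mapH_def)
    qed
  qed
qed

lemma comp_mapH_in:
  assumes "y \<in> set (bin H)"
  shows "\<exists>i. i < length (bin H) \<and> bin H ! i = y \<and> comp_mapH H K y = 2 * (bout K ! i)"
proof -
  have ex: "\<exists>i. i < length (bin H) \<and> bin H ! i = y" using assms by (simp add: in_set_conv_nth)
  show ?thesis using someI_ex[OF ex] assms by (auto simp: comp_mapH_def)
qed

lemma comp_mapH_inj:
  assumes sp: "same_pattern (bout K) (bin H)"
  shows "inj_on (comp_mapH H K) (bverts H)"
proof (rule inj_onI)
  fix y1 y2 assume e: "comp_mapH H K y1 = comp_mapH H K y2"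
  have len: "length (bout K) = length (bin H)" using sp by (simp add: same_pattern_def)
  show "y1 = y2"
  proof (cases "y1 \<in> set (bin H)")
    case c1: True
    obtain i1 where i1: "i1 < length (bin H)" "bin H ! i1 = y1" "comp_mapH H K y1 = 2 * (bout K ! i1)"
      using comp_mapH_in[OF c1] by blast
    show ?thesis
    proof (cases "y2 \<in> set (bin H)")
      case c2: True
      obtain i2 where i2: "i2 < length (bin H)" "bin H ! i2 = y2" "comp_mapH H K y2 = 2 * (bout K ! i2)"
        using comp_mapH_in[OF c2] by blast
      have "bout K ! i1 = bout K ! i2" using e i1 i2 by simp
      then show ?thesis using sp i1 i2 len unfolding same_pattern_def by metis
    next
      case False
      then have "comp_mapH H K y2 = 2 * y2 + 1" by (simp add: comp_mapH_def)
      then show ?thesis using e i1 by presburger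
    qed
  next
    case c1: False
    then have a: "comp_mapH H K y1 = 2 * y1 + 1" by (simp add: comp_mapH_def)
    show ?thesis
    proof (cases "y2 \<in> set (bin H)")
      case c2: True
      obtain i2 where i2: "i2 < length (bin H)" "bin H ! i2 = y2" "comp_mapH H K y2 = 2 * (bout K ! i2)"
        using comp_mapH_in[OF c2] by blast
      then show ?thesis using e a by presburger
    next
      case False
      then show ?thesis using e a by (simp add: comp_mapH_def)
    qed
  qed
qed

lemma comp_mapH_map:
  assumes sp: "same_pattern (bout K) (bin H)"
  shows "map (comp_mapH H K) (bin H) = map (\<lambda>x. 2 * x) (bout K)"
proof (rule nth_equalityI)
  have len: "length (bout K) = length (bin H)" using sp by (simp add: same_pattern_def)
  then show "length (map (comp_mapH H K) (bin H)) = length (map (\<lambda>x. 2 * x) (bout K))" by simp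
  fix m assume "m < length (map (comp_mapH H K) (bin H))"
  then have m: "m < length (bin H)" by simp
  obtain i where i: "i < length (bin H)" "bin H ! i = bin H ! m" "comp_mapH H K (bin H ! m) = 2 * (bout K ! i)"
    using comp_mapH_in[of "bin H ! m" H K] m by auto
  have "bout K ! i = bout K ! m" using sp i m len unfolding same_pattern_def by metis
  then show "map (comp_mapH H K) (bin H) ! m = map (\<lambda>x. 2 * x) (bout K) ! m" using i m len by simp
qed

lemma CC_wf: "K \<in> CC n EG A \<Longrightarrow> wf_blg K"
  by (simp add: CC_def)

lemma CC_eqv: "K \<in> CC n EG A \<Longrightarrow> \<phi> \<in> homs n EG (bverts K) (bedges K) \<Longrightarrow>
   eqv A (map \<phi> (bin K)) (map \<phi> (bout K))"
  by (simp add: CC_def)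

lemma CC_iso: "K \<in> CC n EG A \<Longrightarrow> wf_blg L \<Longrightarrow> blg_iso K L \<Longrightarrow> L \<in> CC n EG A"
proof -
  assume K: "K \<in> CC n EG A" and L: "wf_blg L" and "blg_iso K L"
  then obtain \<psi> where b: "bij_betw \<psi> (bverts K) (bverts L)"
    and ed: "\<forall>x\<in>bverts K. \<forall>y\<in>bverts K. (x, y) \<in> bedges K \<longleftrightarrow> (\<psi> x, \<psi> y) \<in> bedges L"
    and mi: "map \<psi> (bin K) = bin L" and mo: "map \<psi> (bout K) = bout L"
    unfolding blg_iso_def by blast
  have wK: "bedges K \<subseteq> bverts K \<times> bverts K" "set (bin K) \<subseteq> bverts K" "set (bout K) \<subseteq> bverts K"
    using CC_wf[OF K] by (auto simp: wf_blg_def)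
  have "eqv A (map \<phi> (bin L)) (map \<phi> (bout L))" if \<phi>: "\<phi> \<in> homs n EG (bverts L) (bedges L)" for \<phi>
  proof -
    have "restrict (\<phi> \<circ> \<psi>) (bverts K) \<in> homs n EG (bverts K) (bedges K)"
      using b ed wK(1) by (intro homs_pull[OF \<phi>]) (auto simp: bij_betw_def)
    from CC_eqv[OF K this] have "eqv A (map \<phi> (map \<psi> (bin K))) (map \<phi> (map \<psi> (bout K)))"
      by (simp only: map_restrict[OF wK(2)] map_restrict[OF wK(3)])
    then show ?thesis by (simp only: mi mo)
  qed
  then show ?thesis using L by (simp add: CC_def)
qed

lemma CC_N0: "blg_N0 \<in> CC n EG A"
  by (simp add: CC_def blg_N0_def wf_blg_def eqv_refl)

lemma CC_M_id: "blg_M_id \<in> CC n EG A"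
  by (simp add: CC_def blg_M_id_def wf_blg_def eqv_refl)

lemma CC_M_cup: "blg_M_cup \<in> CC n EG A"
  by (simp add: CC_def blg_M_cup_def wf_blg_def eqv_def red_Cons stp_def A_nil)

lemma CC_inv: "K \<in> CC n EG A \<Longrightarrow> blg_inv K \<in> CC n EG A"
  by (auto simp: CC_def blg_inv_def wf_blg_def intro: eqv_sym)

lemma CC_union:
  assumes K: "K \<in> CC n EG A" and H: "H \<in> CC n EG A" and vo: "vertex_overlap K H f"
  shows "blg_union K f H \<in> CC n EG A"
proof -
  let ?U = "blg_union K f H"
  let ?g = "union_mapH f"
  have wK: "finite (bverts K)" "bedges K \<subseteq> bverts K \<times> bverts K" "sym (bedges K)"
    "set (bin K) \<subseteq> bverts K" "set (bout K) \<subseteq> bverts K"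
    using CC_wf[OF K] by (auto simp: wf_blg_def)
  have wH: "finite (bverts H)" "bedges H \<subseteq> bverts H \<times> bverts H" "sym (bedges H)"
    "set (bin H) \<subseteq> bverts H" "set (bout H) \<subseteq> bverts H"
    using CC_wf[OF H] by (auto simp: wf_blg_def)
  have wf1: "bedges ?U \<subseteq> bverts ?U \<times> bverts ?U"
    using wK(2) wH(2) unfolding blg_union_def pmap_def by auto
  have wf2: "sym (bedges ?U)"
    using sym_pmap[OF wK(3), of "\<lambda>x. 2 * x"] sym_pmap[OF wH(3), of ?g]
    unfolding blg_union_def by (simp add: sym_Un)
  have wf3: "set (bin ?U) \<subseteq> bverts ?U" "set (bout ?U) \<subseteq> bverts ?U"
    using wK(4,5) wH(4,5) unfolding blg_union_def by auto
  have wf4: "finite (bverts ?U)" using wK(1) wH(1) unfolding blg_union_def by simp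
  have wf: "wf_blg ?U" using wf1 wf2 wf3 wf4 by (simp add: wf_blg_def)
  have "eqv A (map \<phi> (bin ?U)) (map \<phi> (bout ?U))" if \<phi>: "\<phi> \<in> homs n EG (bverts ?U) (bedges ?U)" for \<phi>
  proof -
    have hK: "restrict (\<phi> \<circ> (\<lambda>x. 2 * x)) (bverts K) \<in> homs n EG (bverts K) (bedges K)"
      using wK(2) by (intro homs_pull[OF \<phi>]) (auto simp: blg_union_def inj_on_def pmap_def)
    have hH: "restrict (\<phi> \<circ> ?g) (bverts H) \<in> homs n EG (bverts H) (bedges H)"
      using wH(2) union_mapH_inj[OF vo]
      by (intro homs_pull[OF \<phi>]) (auto simp: blg_union_def pmap_def)
    have e1: "eqv A (map \<phi> (map (\<lambda>x. 2 * x) (bin K))) (map \<phi> (map (\<lambda>x. 2 * x) (bout K)))"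
      using CC_eqv[OF K hK] by (simp only: map_restrict[OF wK(4)] map_restrict[OF wK(5)])
    have e2: "eqv A (map \<phi> (map ?g (bin H))) (map \<phi> (map ?g (bout H)))"
      using CC_eqv[OF H hH] by (simp only: map_restrict[OF wH(4)] map_restrict[OF wH(5)])
    have "set (map (\<lambda>x. 2 * x) (bin K)) \<subseteq> bverts ?U" using wK(4) by (auto simp: blg_union_def)
    then have s: "set (map \<phi> (map (\<lambda>x. 2 * x) (bin K))) \<subseteq> {..<n}"
      by (rule homs_set[OF \<phi>])
    have "eqv A (map \<phi> (map (\<lambda>x. 2 * x) (bin K)) @ map \<phi> (map ?g (bin H)))
       (map \<phi> (map (\<lambda>x. 2 * x) (bout K)) @ map \<phi> (map ?g (bout H)))"
      using eqv_app[OF s e1 e2] .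
    then show ?thesis by (simp add: blg_union_def)
  qed
  then show ?thesis using wf by (simp add: CC_def)
qed

lemma CC_comp:
  assumes K: "K \<in> CC n EG A" and H: "H \<in> CC n EG A" and sp: "same_pattern (bout K) (bin H)"
  shows "blg_comp H K \<in> CC n EG A"
proof -
  let ?U = "blg_comp H K"
  let ?g = "comp_mapH H K"
  have wK: "finite (bverts K)" "bedges K \<subseteq> bverts K \<times> bverts K" "sym (bedges K)"
    "set (bin K) \<subseteq> bverts K" "set (bout K) \<subseteq> bverts K"
    using CC_wf[OF K] by (auto simp: wf_blg_def)
  have wH: "finite (bverts H)" "bedges H \<subseteq> bverts H \<times> bverts H" "sym (bedges H)"
    "set (bin H) \<subseteq> bverts H" "set (bout H) \<subseteq> bverts H"
    using CC_wf[OF H] by (auto simp: wf_blg_def)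
  have wf1: "bedges ?U \<subseteq> bverts ?U \<times> bverts ?U"
    using wK(2) wH(2) unfolding blg_comp_def pmap_def by auto
  have wf2: "sym (bedges ?U)"
    using sym_pmap[OF wK(3), of "\<lambda>x. 2 * x"] sym_pmap[OF wH(3), of ?g]
    unfolding blg_comp_def by (simp add: sym_Un)
  have wf3: "set (bin ?U) \<subseteq> bverts ?U" "set (bout ?U) \<subseteq> bverts ?U"
    using wK(4,5) wH(4,5) unfolding blg_comp_def by auto
  have wf4: "finite (bverts ?U)" using wK(1) wH(1) unfolding blg_comp_def by simp
  have wf: "wf_blg ?U" using wf1 wf2 wf3 wf4 by (simp add: wf_blg_def)
  have "eqv A (map \<phi> (bin ?U)) (map \<phi> (bout ?U))" if \<phi>: "\<phi> \<in> homs n EG (bverts ?U) (bedges ?U)" for \<phi>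
  proof -
    have hK: "restrict (\<phi> \<circ> (\<lambda>x. 2 * x)) (bverts K) \<in> homs n EG (bverts K) (bedges K)"
      using wK(2) by (intro homs_pull[OF \<phi>]) (auto simp: blg_comp_def inj_on_def pmap_def)
    have hH: "restrict (\<phi> \<circ> ?g) (bverts H) \<in> homs n EG (bverts H) (bedges H)"
      using wH(2) comp_mapH_inj[OF sp]
      by (intro homs_pull[OF \<phi>]) (auto simp: blg_comp_def pmap_def)
    have e1: "eqv A (map \<phi> (map (\<lambda>x. 2 * x) (bin K))) (map \<phi> (map (\<lambda>x. 2 * x) (bout K)))"
      using CC_eqv[OF K hK] by (simp only: map_restrict[OF wK(4)] map_restrict[OF wK(5)])
    have e2: "eqv A (map \<phi> (map ?g (bin H))) (map \<phi> (map ?g (bout H)))"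
      using CC_eqv[OF H hH] by (simp only: map_restrict[OF wH(4)] map_restrict[OF wH(5)])
    have "eqv A (map \<phi> (map (\<lambda>x. 2 * x) (bin K))) (map \<phi> (map ?g (bout H)))"
      using eqv_trans[OF e1] e2 comp_mapH_map[OF sp] by simp
    then show ?thesis by (simp add: blg_comp_def)
  qed
  then show ?thesis using wf by (simp add: CC_def)
qed

lemma CC_skew: "skew_graph_category (CC n EG A)"
  unfolding skew_graph_category_def
proof (intro conjI ballI allI impI)
  show "\<And>K. K \<in> CC n EG A \<Longrightarrow> wf_blg K" by (rule CC_wf)
  show "\<And>K L. K \<in> CC n EG A \<Longrightarrow> wf_blg L \<and> blg_iso K L \<Longrightarrow> L \<in> CC n EG A"
    using CC_iso by blast
  show "blg_N0 \<in> CC n EG A" by (rule CC_N0)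
  show "blg_M_id \<in> CC n EG A" by (rule CC_M_id)
  show "blg_M_cup \<in> CC n EG A" by (rule CC_M_cup)
  show "\<And>K H f. K \<in> CC n EG A \<Longrightarrow> H \<in> CC n EG A \<Longrightarrow> vertex_overlap K H f \<Longrightarrow> blg_union K f H \<in> CC n EG A"
    by (rule CC_union)
  show "\<And>K. K \<in> CC n EG A \<Longrightarrow> blg_inv K \<in> CC n EG A" by (rule CC_inv)
  show "\<And>K H. K \<in> CC n EG A \<Longrightarrow> H \<in> CC n EG A \<Longrightarrow> same_pattern (bout K) (bin H) \<Longrightarrow> blg_comp H K \<in> CC n EG A"
    by (rule CC_comp)
qed

lemma graphC_eq: "graphC n EG (CC n EG A) k l = Mor n A (AutG n EG) k l"
proof
  show "graphC n EG (CC n EG A) k l \<subseteq> Mor n A (AutG n EG) k l"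
    unfolding graphC_def by (rule Mor_cspan) (auto intro: hatT_Mor)
  show "Mor n A (AutG n EG) k l \<subseteq> graphC n EG (CC n EG A) k l"
    using Mor_sub by blast
qed

end

theorem proposition5p1:
  fixes n :: nat and EG :: "(nat \<times> nat) set" and A :: "nat list set"
  assumes "EG \<subseteq> {..<n} \<times> {..<n}" and "sym EG"
    and "normal_subgroup_Z2 n A" and "invariant_under (AutG n EG) A"
  shows "\<exists>C. skew_graph_category C \<and>
           (\<forall>k l. graphC n EG C k l = Mor n A (AutG n EG) k l)"
proof -
  interpret GA n A EG
    using assms by (simp add: GA_def GA_axioms_def NS_def)
  show ?thesis using CC_skew graphC_eq by blast
qed

end
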